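(* Let $c$ be a natural number and let $\phi$ be a function that assigns to every $m$-input/$m$-output conditional distribution $p(y^{(1)},\dots,y^{(m)}\mid x^{(1)},\dots,x^{(m)})$ on finite sets, together with a set $\Psi$ of distributions on its input alphabet $\mathcal{X}^{(1)}\times\cdots\times\mathcal{X}^{(m)}$, a subset $\phi(p,\Psi)\subseteq\mathbb{R}_+^c$, and suppose $\phi$ satisfies: (1) If $p(y^{(1)}y'^{(1)},\dots,y^{(m)}y'^{(m)}\mid x^{(1)},\dots,x^{(m)})=p(y^{(1)},\dots,y^{(m)}\mid x^{(1)},\dots,x^{(m)})\,p(y'^{(1)},\dots,y'^{(m)}\mid x'^{(1)},\dots,x'^{(m)})$ where each $x'^{(i)}\in\mathcal{X}'^{(i)}$ is a deterministic function of $y^{(i)}$, then for every input distribution $q(x^{(1)},\dots,x^{(m)})$ and every set $\Psi$ of distributions on $\mathcal{X}'^{(1)}\times\cdots\times\mathcal{X}'^{(m)}$ containing the distribution of $(X'^{(1)},\dots,X'^{(m)})$ induced by $q$ and $p(y\mid x)$, \[\phi\big(p(y^{(1)}y'^{(1)},\dots,y^{(m)}y'^{(m)}\mid x),\{q\}\big)\subseteq\phi\big(p(y\mid x),\{q\}\big)\oplus\phi\big(p(y'\mid x'),\Psi\big);\] (2) If $p(y^{(1)},\dots,y^{(m)}\mid x^{(1)},\dots,x^{(m)})=\prod_{i=1}^m\mathbf{1}[y^{(i)}=x^{(i)}]$, then $\phi(p,\{q\})=\{0\}$ for every input distribution $q$; (3) If $p(z^{(1)},\dots,z^{(m)},y^{(1)},\dots,y^{(m)}\mid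 x)=p(y^{(1)},\dots,y^{(m)}\mid x)\prod_{i=1}^m p(z^{(i)}\mid y^{(i)})$, then for every input distribution $q$, $\phi(p(z^{(1)},\dots,z^{(m)}\mid x),\{q\})\subseteq\phi(p(y^{(1)},\dots,y^{(m)}\mid x),\{q\})$. Then for every multiterminal network $q(y^{(1)},\dots,y^{(m)}\mid x^{(1)},\dots,x^{(m)})$, every source $p(w^{(1)},\dots,w^{(m)})$, functions $f^{(i)}$, distortion functions $\Delta^{(i)}$ and levels $D^{(i)}$, every $\epsilon>0$, every $(n)$-code with $\mathbb{E}[\Delta^{(i)}_n(\widehat{M}^{(i)}_{1:n},M^{(i)}_{1:n})]\le D^{(i)}+\epsilon$ for all $i\in[m]$, and every permissible set $\Psi$ of input distributions, \[ \phi\Big(p(\widehat{m}^{(1)}_{1:n},\dots,\widehat{m}^{(m)}_{1:n}\mid w^{(1)}_{1:n},\dots,w^{(m)}_{1:n}),\ \{p(w^{(1)}_{1:n},\dots,w^{(m)}_{1:n})\}\Big)\subseteq n\times\mathrm{ConvexHull}\Big(\phi\big(q(y^{(1)},\dots,y^{(m)}\mid x^{(1)},\dots,x^{(m)}),\Psi\big)\Big), \] where $W^{(i)}_{1:n}$ are the source blocks observed at the nodes and $\widehat{M}^{(i)}_{1:n}=\vartheta^{(i)}(W^{(i)}_{1:n},Y^{(i)}_{1:n})$ are the reconstructions produced by the code.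
   Context: All alphabets are finite; $[k]=\{1,\dots,k\}$. For $K,L\subseteq\mathbb{R}_+^c$, $K\oplus L=\{v_1+v_2:v_1\in K,v_2\in L\}$ (Minkowski sum) and $r\times K=\{rv:v\in K\}$. A GMN is a conditional distribution $q(y^{(1)},\dots,y^{(m)}\mid x^{(1)},\dots,x^{(m)})$. Node $i$ observes i.i.d. repetitions of $W^{(i)}$, jointly distributed as $p(w^{(1)},\dots,w^{(m)})$, and wants $M^{(i)}=f^{(i)}(W^{(1)},\dots,W^{(m)})$; $\Delta^{(i)}$ is a distortion function with $\Delta^{(i)}(a,a)=0$ and $\Delta^{(i)}_n(m_{1:n},m'_{1:n})=\frac1n\sum_k\Delta^{(i)}(m_k,m'_k)$. An $(n)$-code consists of encoders $\zeta^{(i)}_1:(\mathcal{W}^{(i)})^n\to\mathcal{X}^{(i)}$, $\zeta^{(i)}_k:(\mathcal{W}^{(i)})^n\times(\mathcal{Y}^{(i)})^{k-1}\to\mathcal{X}^{(i)}$ ($2\le k\le n$) and decoders $\vartheta^{(i)}:(\mathcal{W}^{(i)})^n\times(\mathcal{Y}^{(i)})^n\to(\mathcal{M}^{(i)})^n$. In operation, the source letters are i.i.d. across time, $X^{(i)}_k=\zeta^{(i)}_k(W^{(i)}_{1:n},Y^{(i)}_{1:k-1})$, and given all past variables and the current inputs, $(Y^{(1)}_k,\dots,Y^{(m)}_k)$ is drawn from $q(\cdot\mid X^{(1)}_k,\dots,X^{(m)}_k)$; $M^{(i)}_k=f^{(i)}(W^{(1)}_k,\dots,W^{(m)}_k)$.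 A permissible set $\Psi$ is a set of joint distributions on $\mathcal{X}^{(1)}\times\cdots\times\mathcal{X}^{(m)}$ that, for the given network and source, contains the joint distribution of the channel inputs $(X^{(1)}_k,\dots,X^{(m)}_k)$ at every time $k$ for any code. *)

theory Defs
  imports "HOL-Probability.Probability"
begin

text \<open>Universal symbol type: every finite alphabet is a finite subset of sym.
  Pairs of symbols and blocks (lists) of symbols are again symbols.\<close>
datatype sym = Atom nat | SPair sym sym | SList "sym list"

fun sfst :: "sym \<Rightarrow> sym" where "sfst (SPair a b) = a" | "sfst _ = Atom 0"
fun ssnd :: "sym \<Rightarrow> sym" where "ssnd (SPair a b) = b" | "ssnd _ = Atom 0"
fun unSList :: "sym \<Rightarrow> sym list" where "unSList (SList l) = l" | "unSList _ = []"

text \<open>Tuples (x^(1),...,x^(m)) are indexed by {..<m} (i.e. node i+1 is index i).\<close>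
definition tup :: "nat \<Rightarrow> (nat \<Rightarrow> sym set) \<Rightarrow> (nat \<Rightarrow> sym) set" where
  "tup m A = PiE {..<m} A"

record chan =
  inA  :: "nat \<Rightarrow> sym set"
  outA :: "nat \<Rightarrow> sym set"
  ker  :: "(nat \<Rightarrow> sym) \<Rightarrow> (nat \<Rightarrow> sym) \<Rightarrow> real"

definition alph :: "nat \<Rightarrow> (nat \<Rightarrow> sym set) \<Rightarrow> bool" where
  "alph m A \<longleftrightarrow> (\<forall>i<m. finite (A i) \<and> A i \<noteq> {}) \<and> (\<forall>i\<ge>m. A i = {})"

definition wf_chan :: "nat \<Rightarrow> chan \<Rightarrow> bool" where
  "wf_chan m C \<longleftrightarrow> alph m (inA C) \<and> alph m (outA C) \<and>
     (\<forall>x y. 0 \<le> ker C x y) \<and>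
     (\<forall>x y. ker C x y \<noteq> 0 \<longrightarrow> x \<in> tup m (inA C) \<and> y \<in> tup m (outA C)) \<and>
     (\<forall>x\<in>tup m (inA C). (\<Sum>y\<in>tup m (outA C). ker C x y) = 1)"

definition dist_on :: "nat \<Rightarrow> (nat \<Rightarrow> sym set) \<Rightarrow> (nat \<Rightarrow> sym) pmf \<Rightarrow> bool" where
  "dist_on m A q \<longleftrightarrow> set_pmf q \<subseteq> tup m A"

definition outp :: "chan \<Rightarrow> (nat \<Rightarrow> sym) \<Rightarrow> (nat \<Rightarrow> sym) pmf" where
  "outp C x = embed_pmf (ker C x)"

definition msum :: "('a::real_vector) set \<Rightarrow> 'a set \<Rightarrow> 'a set" where
  "msum K L = {v1 + v2 | v1 v2. v1 \<in> K \<and> v2 \<in> L}"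

definition rtimes :: "real \<Rightarrow> ('a::real_vector) set \<Rightarrow> 'a set" where
  "rtimes r K = (\<lambda>v. r *\<^sub>R v) ` K"

text \<open>Property (1): channel p(y y'|x) = p(y|x) p(y'|x'), x'^(i) = g i (y^(i)).\<close>
definition pair_ch :: "nat \<Rightarrow> chan \<Rightarrow> (nat \<Rightarrow> sym \<Rightarrow> sym) \<Rightarrow> chan \<Rightarrow> chan" where
  "pair_ch m C1 g C2 =
    (let YY = (\<lambda>i. if i < m then {SPair a b | a b. a \<in> outA C1 i \<and> b \<in> outA C2 i} else {})
     in \<lparr> inA = inA C1, outA = YY,
          ker = (\<lambda>x yy. if x \<in> tup m (inA C1) \<and> yy \<in> tup m YY then
                   ker C1 x (restrict (\<lambda>i. sfst (yy i)) {..<m}) *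
                   ker C2 (restrict (\<lambda>i. g i (sfst (yy i))) {..<m}) (restrict (\<lambda>i. ssnd (yy i)) {..<m})
                 else 0) \<rparr>)"

definition induced :: "nat \<Rightarrow> chan \<Rightarrow> (nat \<Rightarrow> sym \<Rightarrow> sym) \<Rightarrow> (nat \<Rightarrow> sym) pmf \<Rightarrow> (nat \<Rightarrow> sym) pmf" where
  "induced m C1 g q = bind_pmf q (\<lambda>x. map_pmf (\<lambda>y. restrict (\<lambda>i. g i (y i)) {..<m}) (outp C1 x))"

definition id_ch :: "nat \<Rightarrow> (nat \<Rightarrow> sym set) \<Rightarrow> chan" where
  "id_ch m A = \<lparr> inA = A, outA = A, ker = (\<lambda>x y. if x \<in> tup m A \<and> y = x then 1 else 0) \<rparr>"

definition post_ch :: "nat \<Rightarrow> chan \<Rightarrow> (nat \<Rightarrow> sym set) \<Rightarrow> (nat \<Rightarrow> sym \<Rightarrow> sym \<Rightarrow> real) \<Rightarrow> chan" where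
  "post_ch m C Z T = \<lparr> inA = inA C, outA = Z,
     ker = (\<lambda>x z. if x \<in> tup m (inA C) \<and> z \<in> tup m Z then
              (\<Sum>y\<in>tup m (outA C). ker C x y * (\<Prod>i<m. T i (y i) (z i))) else 0) \<rparr>"

definition local_chans :: "nat \<Rightarrow> (nat \<Rightarrow> sym set) \<Rightarrow> (nat \<Rightarrow> sym set) \<Rightarrow> (nat \<Rightarrow> sym \<Rightarrow> sym \<Rightarrow> real) \<Rightarrow> bool" where
  "local_chans m Y Z T \<longleftrightarrow> (\<forall>i<m. \<forall>y\<in>Y i. (\<forall>z. 0 \<le> T i y z) \<and> (\<Sum>z\<in>Z i. T i y z) = 1)"

text \<open>Operation of an (n)-code.  Encoder: zeta i k wblock ypast (time k = 0..n-1,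
  ypast of length k); decoder: theta i wblock yblock.\<close>
definition xin :: "nat \<Rightarrow> (nat \<Rightarrow> nat \<Rightarrow> sym list \<Rightarrow> sym list \<Rightarrow> sym) \<Rightarrow> (nat \<Rightarrow> sym) list
                   \<Rightarrow> (nat \<Rightarrow> sym) list \<Rightarrow> (nat \<Rightarrow> sym)" where
  "xin m \<zeta> ws ys = restrict (\<lambda>i. \<zeta> i (length ys) (map (\<lambda>w. w i) ws) (map (\<lambda>y. y i) ys)) {..<m}"

fun run :: "nat \<Rightarrow> chan \<Rightarrow> (nat \<Rightarrow> nat \<Rightarrow> sym list \<Rightarrow> sym list \<Rightarrow> sym) \<Rightarrow> (nat \<Rightarrow> sym) list
            \<Rightarrow> nat \<Rightarrow> (nat \<Rightarrow> sym) list pmf" where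
  "run m N \<zeta> ws 0 = return_pmf []"
| "run m N \<zeta> ws (Suc k) = bind_pmf (run m N \<zeta> ws k)
      (\<lambda>ys. map_pmf (\<lambda>y. ys @ [y]) (outp N (xin m \<zeta> ws ys)))"

fun iid_pmf :: "'a pmf \<Rightarrow> nat \<Rightarrow> 'a list pmf" where
  "iid_pmf p 0 = return_pmf []"
| "iid_pmf p (Suc n) = bind_pmf (iid_pmf p n) (\<lambda>ws. map_pmf (\<lambda>w. ws @ [w]) p)"

definition joint :: "nat \<Rightarrow> chan \<Rightarrow> (nat \<Rightarrow> sym) pmf \<Rightarrow> nat \<Rightarrow> (nat \<Rightarrow> nat \<Rightarrow> sym list \<Rightarrow> sym list \<Rightarrow> sym)
                     \<Rightarrow> nat \<Rightarrow> ((nat \<Rightarrow> sym) list \<times> (nat \<Rightarrow> sym) list) pmf" where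
  "joint m N pW n \<zeta> k = bind_pmf (iid_pmf pW n) (\<lambda>ws. map_pmf (\<lambda>ys. (ws, ys)) (run m N \<zeta> ws k))"

text \<open>Distribution of the channel inputs (X^(1)_k,...,X^(m)_k) (time k, 0-based).\<close>
definition input_dist :: "nat \<Rightarrow> chan \<Rightarrow> (nat \<Rightarrow> sym) pmf \<Rightarrow> nat \<Rightarrow> (nat \<Rightarrow> nat \<Rightarrow> sym list \<Rightarrow> sym list \<Rightarrow> sym)
                          \<Rightarrow> nat \<Rightarrow> (nat \<Rightarrow> sym) pmf" where
  "input_dist m N pW n \<zeta> k = map_pmf (\<lambda>(ws, ys). xin m \<zeta> ws ys) (joint m N pW n \<zeta> k)"

definition enc_valid :: "nat \<Rightarrow> chan \<Rightarrow> (nat \<Rightarrow> sym set) \<Rightarrow> nat \<Rightarrow> (nat \<Rightarrow> nat \<Rightarrow> sym list \<Rightarrow> sym list \<Rightarrow> sym) \<Rightarrow> bool" where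
  "enc_valid m N W n \<zeta> \<longleftrightarrow> 0 < n \<and> (\<forall>i<m. \<forall>k<n. \<forall>w ys. w \<in> lists (W i) \<and> length w = n \<and>
       ys \<in> lists (outA N i) \<and> length ys = k \<longrightarrow> \<zeta> i k w ys \<in> inA N i)"

definition dec_valid :: "nat \<Rightarrow> chan \<Rightarrow> (nat \<Rightarrow> sym set) \<Rightarrow> (nat \<Rightarrow> sym set) \<Rightarrow> nat
                         \<Rightarrow> (nat \<Rightarrow> sym list \<Rightarrow> sym list \<Rightarrow> sym list) \<Rightarrow> bool" where
  "dec_valid m N W M n \<theta> \<longleftrightarrow> (\<forall>i<m. \<forall>w y. w \<in> lists (W i) \<and> length w = n \<and>
       y \<in> lists (outA N i) \<and> length y = n \<longrightarrow> \<theta> i w y \<in> lists (M i) \<and> length (\<theta> i w y) = n)"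

definition permissible :: "nat \<Rightarrow> chan \<Rightarrow> (nat \<Rightarrow> sym set) \<Rightarrow> (nat \<Rightarrow> sym) pmf \<Rightarrow> (nat \<Rightarrow> sym) pmf set \<Rightarrow> bool" where
  "permissible m N W pW \<Psi> \<longleftrightarrow> (\<forall>q\<in>\<Psi>. dist_on m (inA N) q) \<and>
     (\<forall>n \<zeta>. enc_valid m N W n \<zeta> \<longrightarrow> (\<forall>k<n. input_dist m N pW n \<zeta> k \<in> \<Psi>))"

definition exp_dist :: "nat \<Rightarrow> chan \<Rightarrow> (nat \<Rightarrow> sym) pmf \<Rightarrow> nat \<Rightarrow> (nat \<Rightarrow> nat \<Rightarrow> sym list \<Rightarrow> sym list \<Rightarrow> sym)
     \<Rightarrow> (nat \<Rightarrow> sym list \<Rightarrow> sym list \<Rightarrow> sym list) \<Rightarrow> (nat \<Rightarrow> (nat \<Rightarrow> sym) \<Rightarrow> sym)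
     \<Rightarrow> (nat \<Rightarrow> sym \<Rightarrow> sym \<Rightarrow> real) \<Rightarrow> nat \<Rightarrow> real" where
  "exp_dist m N pW n \<zeta> \<theta> f \<Delta> i = measure_pmf.expectation (joint m N pW n \<zeta> n)
     (\<lambda>(ws, ys). (\<Sum>t<n. \<Delta> i (\<theta> i (map (\<lambda>w. w i) ws) (map (\<lambda>y. y i) ys) ! t) (f i (ws ! t))) / real n)"

text \<open>The block channel p(hat m_{1:n} | w_{1:n}) induced by the code, with block
  alphabets (W^(i))^n and (M^(i))^n encoded as SList symbols.\<close>
definition blk :: "nat \<Rightarrow> (nat \<Rightarrow> sym set) \<Rightarrow> nat \<Rightarrow> nat \<Rightarrow> sym set" where
  "blk m A n = (\<lambda>i. if i < m then {SList l | l. l \<in> lists (A i) \<and> length l = n} else {})"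

definition inblock :: "nat \<Rightarrow> (nat \<Rightarrow> sym) list \<Rightarrow> (nat \<Rightarrow> sym)" where
  "inblock m ws = restrict (\<lambda>i. SList (map (\<lambda>w. w i) ws)) {..<m}"

definition outblock :: "nat \<Rightarrow> (nat \<Rightarrow> sym list \<Rightarrow> sym list \<Rightarrow> sym list) \<Rightarrow> (nat \<Rightarrow> sym) list
                        \<Rightarrow> (nat \<Rightarrow> sym) list \<Rightarrow> (nat \<Rightarrow> sym)" where
  "outblock m \<theta> ws ys = restrict (\<lambda>i. SList (\<theta> i (map (\<lambda>w. w i) ws) (map (\<lambda>y. y i) ys))) {..<m}"

definition unblock :: "nat \<Rightarrow> nat \<Rightarrow> (nat \<Rightarrow> sym) \<Rightarrow> (nat \<Rightarrow> sym) list" where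
  "unblock m n wt = map (\<lambda>t. restrict (\<lambda>i. unSList (wt i) ! t) {..<m}) [0..<n]"

definition block_ch :: "nat \<Rightarrow> chan \<Rightarrow> (nat \<Rightarrow> sym set) \<Rightarrow> (nat \<Rightarrow> sym set) \<Rightarrow> nat
     \<Rightarrow> (nat \<Rightarrow> nat \<Rightarrow> sym list \<Rightarrow> sym list \<Rightarrow> sym) \<Rightarrow> (nat \<Rightarrow> sym list \<Rightarrow> sym list \<Rightarrow> sym list) \<Rightarrow> chan" where
  "block_ch m N W M n \<zeta> \<theta> = \<lparr> inA = blk m W n, outA = blk m M n,
     ker = (\<lambda>wt mt. if wt \<in> tup m (blk m W n) \<and> mt \<in> tup m (blk m M n) then
              pmf (map_pmf (outblock m \<theta> (unblock m n wt)) (run m N \<zeta> (unblock m n wt) n)) mt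
            else 0) \<rparr>"

definition block_src :: "nat \<Rightarrow> (nat \<Rightarrow> sym) pmf \<Rightarrow> nat \<Rightarrow> (nat \<Rightarrow> sym) pmf" where
  "block_src m pW n = map_pmf (inblock m) (iid_pmf pW n)"

end

theory Submission
  imports Defs
begin


lemma finite_tup: "alph m A \<Longrightarrow> finite (tup m A)"
  unfolding tup_def alph_def by (auto intro!: finite_PiE)

lemma wf_chanD: assumes "wf_chan m C"
  shows "alph m (inA C)" "alph m (outA C)" "\<And>x y. 0 \<le> ker C x y"
    "\<And>x y. ker C x y \<noteq> 0 \<Longrightarrow> x \<in> tup m (inA C)"
    "\<And>x y. ker C x y \<noteq> 0 \<Longrightarrow> y \<in> tup m (outA C)"
    "\<And>x. x \<in> tup m (inA C) \<Longrightarrow> (\<Sum>y\<in>tup m (outA C). ker C x y) = 1"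
  using assms unfolding wf_chan_def by blast+

lemma outp_pmf:
  assumes C: "wf_chan m C" and x: "x \<in> tup m (inA C)"
  shows "pmf (outp C x) y = ker C x y"
  unfolding outp_def
proof (rule pmf_embed_pmf)
  show "\<And>y. 0 \<le> ker C x y" using C by (auto simp: wf_chan_def)
  have fin: "finite (tup m (outA C))" using C by (auto simp: wf_chan_def intro: finite_tup)
  have "(\<integral>\<^sup>+y. ennreal (ker C x y) \<partial>count_space UNIV) = (\<Sum>y\<in>tup m (outA C). ennreal (ker C x y))"
    by (rule nn_integral_count_space'[OF fin]) (use C in \<open>auto simp: wf_chan_def\<close>)
  also have "\<dots> = ennreal (\<Sum>y\<in>tup m (outA C). ker C x y)"
    using C by (subst sum_ennreal) (auto simp: wf_chan_def)
  also have "\<dots> = 1" using C x by (simp add: wf_chan_def)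
  finally show "(\<integral>\<^sup>+y. ennreal (ker C x y) \<partial>count_space UNIV) = 1" .
qed

lemma outp_set:
  assumes C: "wf_chan m C" and x: "x \<in> tup m (inA C)"
  shows "set_pmf (outp C x) \<subseteq> tup m (outA C)"
proof
  fix y assume "y \<in> set_pmf (outp C x)"
  then have "pmf (outp C x) y \<noteq> 0" by (simp add: set_pmf_eq)
  then have "ker C x y \<noteq> 0" using outp_pmf[OF C x] by simp
  then show "y \<in> tup m (outA C)" using wf_chanD(5)[OF C] by blast
qed

definition pairf :: "nat \<Rightarrow> (nat \<Rightarrow> sym) \<Rightarrow> (nat \<Rightarrow> sym) \<Rightarrow> (nat \<Rightarrow> sym)" where
  "pairf m y y' = restrict (\<lambda>i. SPair (y i) (y' i)) {..<m}"

definition gr :: "nat \<Rightarrow> (nat \<Rightarrow> sym \<Rightarrow> sym) \<Rightarrow> (nat \<Rightarrow> sym) \<Rightarrow> (nat \<Rightarrow> sym)" where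
  "gr m g y = restrict (\<lambda>i. g i (y i)) {..<m}"

definition PB :: "nat \<Rightarrow> chan \<Rightarrow> (nat \<Rightarrow> sym \<Rightarrow> sym) \<Rightarrow> chan \<Rightarrow> (nat \<Rightarrow> sym) \<Rightarrow> (nat \<Rightarrow> sym) pmf" where
  "PB m C1 g C2 x = bind_pmf (outp C1 x) (\<lambda>y. map_pmf (pairf m y) (outp C2 (gr m g y)))"

lemma tup_ext: "y \<in> tup m A \<Longrightarrow> i \<ge> m \<Longrightarrow> y i = undefined"
  using PiE_arb[of y "{..<m}" A i] unfolding tup_def by simp

lemma pairf_inj:
  assumes "y1 \<in> tup m A" "y2 \<in> tup m A" "y1' \<in> tup m B" "y2' \<in> tup m B"
    "pairf m y1 y1' = pairf m y2 y2'"
  shows "y1 = y2 \<and> y1' = y2'"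
proof -
  have c: "y1 i = y2 i \<and> y1' i = y2' i" if "i < m" for i
  proof -
    have "SPair (y1 i) (y1' i) = SPair (y2 i) (y2' i)"
      using fun_cong[OF assms(5), of i] that by (simp add: pairf_def)
    then show ?thesis by simp
  qed
  have "y1 = y2"
  proof
    fix i show "y1 i = y2 i"
      by (cases "i < m") (use c tup_ext[OF assms(1)] tup_ext[OF assms(2)] in auto)
  qed
  moreover have "y1' = y2'"
  proof
    fix i show "y1' i = y2' i"
      by (cases "i < m") (use c tup_ext[OF assms(3)] tup_ext[OF assms(4)] in auto)
  qed
  ultimately show ?thesis by simp
qed

lemma pmf_single:
  fixes f :: "'a \<Rightarrow> real"
  assumes "\<And>y. y \<in> set_pmf p \<Longrightarrow> y \<noteq> a \<Longrightarrow> f y = 0"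
  shows "measure_pmf.expectation p f = pmf p a * f a"
  using integral_measure_pmf[of "{a}" p f] assms by auto

lemma pmf_zero_int:
  fixes f :: "'a \<Rightarrow> real"
  assumes "\<And>y. y \<in> set_pmf p \<Longrightarrow> f y = 0"
  shows "measure_pmf.expectation p f = 0"
  using integral_measure_pmf[of "{}" p f] assms by auto

lemma pair_ker:
  assumes C1: "wf_chan m C1" and C2: "wf_chan m C2"
    and g: "\<forall>i<m. \<forall>y\<in>outA C1 i. g i y \<in> inA C2 i"
    and x: "x \<in> tup m (inA C1)"
  shows "ker (pair_ch m C1 g C2) x yy = pmf (PB m C1 g C2 x) yy"
proof -
  define YY where "YY = (\<lambda>i. if i < m then {SPair a b | a b. a \<in> outA C1 i \<and> b \<in> outA C2 i} else {})"
  have kdef: "ker (pair_ch m C1 g C2) x yy = (if yy \<in> tup m YY then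
                   ker C1 x (restrict (\<lambda>i. sfst (yy i)) {..<m}) *
                   ker C2 (restrict (\<lambda>i. g i (sfst (yy i))) {..<m}) (restrict (\<lambda>i. ssnd (yy i)) {..<m})
                 else 0)" using x unfolding pair_ch_def Let_def YY_def by simp
  have grin: "gr m g y \<in> tup m (inA C2)" if "y \<in> tup m (outA C1)" for y
    unfolding tup_def gr_def restrict_PiE_iff
  proof
    fix i assume "i \<in> {..<m}"
    then have "i < m" "y i \<in> outA C1 i" using PiE_mem[OF that[unfolded tup_def]] by auto
    then show "g i (y i) \<in> inA C2 i" using g by blast
  qed
  have pin: "pairf m y y' \<in> tup m YY" if "y \<in> tup m (outA C1)" "y' \<in> tup m (outA C2)" for y y'
    unfolding tup_def pairf_def restrict_PiE_iff
  proof
    fix i assume "i \<in> {..<m}"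
    then have "i < m" "y i \<in> outA C1 i" "y' i \<in> outA C2 i"
      using PiE_mem[OF that(1)[unfolded tup_def]] PiE_mem[OF that(2)[unfolded tup_def]] by auto
    then show "SPair (y i) (y' i) \<in> YY i" unfolding YY_def by auto
  qed
  have S1: "set_pmf (outp C1 x) \<subseteq> tup m (outA C1)" by (rule outp_set[OF C1 x])
  have S2: "set_pmf (outp C2 (gr m g y)) \<subseteq> tup m (outA C2)" if "y \<in> tup m (outA C1)" for y
    by (rule outp_set[OF C2 grin[OF that]])
  show ?thesis
  proof (cases "yy \<in> tup m YY")
    case True
    define y0 where "y0 = restrict (\<lambda>i. sfst (yy i)) {..<m}"
    define y0' where "y0' = restrict (\<lambda>i. ssnd (yy i)) {..<m}"
    have comp: "sfst (yy i) \<in> outA C1 i \<and> ssnd (yy i) \<in> outA C2 i" 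
      and comp2: "yy i = SPair (sfst (yy i)) (ssnd (yy i))"
      if i: "i < m" for i
    proof -
      have "yy i \<in> YY i" using PiE_mem[OF True[unfolded tup_def]] i by simp
      then obtain a b where ab: "yy i = SPair a b" "a \<in> outA C1 i" "b \<in> outA C2 i"
        using i unfolding YY_def by auto
      then show "sfst (yy i) \<in> outA C1 i \<and> ssnd (yy i) \<in> outA C2 i" by simp
      from ab(1) show "yy i = SPair (sfst (yy i)) (ssnd (yy i))" by simp
    qed
    have yext: "yy j = undefined" if "\<not> j < m" for j using tup_ext[OF True] that by simp
    have y0: "y0 \<in> tup m (outA C1)" unfolding y0_def tup_def restrict_PiE_iff using comp by simp
    have y0': "y0' \<in> tup m (outA C2)" unfolding y0'_def tup_def restrict_PiE_iff using comp by simp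
    have yyeq: "yy = pairf m y0 y0'"
    proof
      fix j show "yy j = pairf m y0 y0' j"
      proof (cases "j < m")
        case True
        have e2: "pairf m y0 y0' j = SPair (sfst (yy j)) (ssnd (yy j))"
          using True by (simp add: pairf_def y0_def y0'_def)
        show ?thesis by (rule trans[OF comp2[OF True] sym[OF e2]])
      next
        case False
        then show ?thesis using yext[OF False] by (simp add: pairf_def)
      qed
    qed
    have gy0: "gr m g y0 = restrict (\<lambda>i. g i (sfst (yy i))) {..<m}"
      unfolding gr_def y0_def by auto
    have "pmf (PB m C1 g C2 x) yy = measure_pmf.expectation (outp C1 x) (\<lambda>y. pmf (map_pmf (pairf m y) (outp C2 (gr m g y))) yy)"
      unfolding PB_def pmf_bind ..
    also have "\<dots> = pmf (outp C1 x) y0 * pmf (map_pmf (pairf m y0) (outp C2 (gr m g y0))) yy"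
    proof (rule pmf_single)
      fix y assume yin: "y \<in> set_pmf (outp C1 x)" and ne: "y \<noteq> y0"
      show "pmf (map_pmf (pairf m y) (outp C2 (gr m g y))) yy = 0"
      proof (rule pmf_map_outside, rule notI)
        assume "yy \<in> pairf m y ` set_pmf (outp C2 (gr m g y))"
        then obtain y' where y': "y' \<in> set_pmf (outp C2 (gr m g y))" and e: "yy = pairf m y y'" by (rule imageE)
        have yT: "y \<in> tup m (outA C1)" using S1 yin by (rule subsetD)
        have y'T: "y' \<in> tup m (outA C2)" using S2[OF yT] y' by (rule subsetD)
        have "pairf m y y' = pairf m y0 y0'" using e yyeq by simp
        from pairf_inj[OF yT y0 y'T y0' this] ne show False by simp
      qed
    qed
    also have "pmf (map_pmf (pairf m y0) (outp C2 (gr m g y0))) yy = pmf (outp C2 (gr m g y0)) y0'"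
    proof (cases "y0' \<in> set_pmf (outp C2 (gr m g y0))")
      case True
      have inj: "inj_on (pairf m y0) (set_pmf (outp C2 (gr m g y0)))"
      proof (rule inj_onI)
        fix a b assume a: "a \<in> set_pmf (outp C2 (gr m g y0))" and b: "b \<in> set_pmf (outp C2 (gr m g y0))"
          and e: "pairf m y0 a = pairf m y0 b"
        have aT: "a \<in> tup m (outA C2)" using S2[OF y0] a by (rule subsetD)
        have bT: "b \<in> tup m (outA C2)" using S2[OF y0] b by (rule subsetD)
        from pairf_inj[OF y0 y0 aT bT e] show "a = b" by simp
      qed
      show ?thesis unfolding yyeq by (rule pmf_map_inj[OF inj True])
    next
      case False
      then have "pmf (outp C2 (gr m g y0)) y0' = 0" by (simp add: set_pmf_eq)
      moreover have "pmf (map_pmf (pairf m y0) (outp C2 (gr m g y0))) yy = 0"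
      proof (rule pmf_map_outside, rule notI)
        assume "yy \<in> pairf m y0 ` set_pmf (outp C2 (gr m g y0))"
        then obtain y' where y': "y' \<in> set_pmf (outp C2 (gr m g y0))" and e: "yy = pairf m y0 y'" by (rule imageE)
        have y'T: "y' \<in> tup m (outA C2)" using S2[OF y0] y' by (rule subsetD)
        have "pairf m y0 y' = pairf m y0 y0'" using e yyeq by simp
        from pairf_inj[OF y0 y0 y'T y0' this] have "y' = y0'" by simp
        with y' False show False by simp
      qed
      ultimately show ?thesis by simp
    qed
    finally have P: "pmf (PB m C1 g C2 x) yy = ker C1 x y0 * ker C2 (gr m g y0) y0'"
      using outp_pmf[OF C1 x] outp_pmf[OF C2 grin[OF y0]] by simp
    have K: "ker (pair_ch m C1 g C2) x yy = ker C1 x y0 * ker C2 (gr m g y0) y0'"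
      unfolding kdef gy0 unfolding y0_def y0'_def by (simp only: True if_True)
    show ?thesis using P K by simp
  next
    case False
    have "pmf (PB m C1 g C2 x) yy = measure_pmf.expectation (outp C1 x) (\<lambda>y. pmf (map_pmf (pairf m y) (outp C2 (gr m g y))) yy)"
      unfolding PB_def pmf_bind ..
    also have "\<dots> = 0"
    proof (rule pmf_zero_int)
      fix y assume yin: "y \<in> set_pmf (outp C1 x)"
      show "pmf (map_pmf (pairf m y) (outp C2 (gr m g y))) yy = 0"
      proof (rule pmf_map_outside, rule notI)
        assume "yy \<in> pairf m y ` set_pmf (outp C2 (gr m g y))"
        then obtain y' where y': "y' \<in> set_pmf (outp C2 (gr m g y))" and e: "yy = pairf m y y'" by (rule imageE)
        have yT: "y \<in> tup m (outA C1)" using S1 yin by (rule subsetD)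
        have y'T: "y' \<in> tup m (outA C2)" using S2[OF yT] y' by (rule subsetD)
        from pin[OF yT y'T] e False show False by simp
      qed
    qed
    finally show ?thesis using False kdef by simp
  qed
qed


lemma alph_pair:
  assumes C1: "wf_chan m C1" and C2: "wf_chan m C2"
  shows "alph m (\<lambda>i. if i < m then {SPair a b | a b. a \<in> outA C1 i \<and> b \<in> outA C2 i} else {})"
proof -
  have fin: "finite {SPair a b | a b. a \<in> outA C1 i \<and> b \<in> outA C2 i}" if "i < m" for i
  proof -
    have e: "{SPair a b | a b. a \<in> outA C1 i \<and> b \<in> outA C2 i} = (\<lambda>(a,b). SPair a b) ` (outA C1 i \<times> outA C2 i)"
      by auto
    have "finite (outA C1 i)" "finite (outA C2 i)" using C1 C2 that by (simp_all add: wf_chan_def alph_def)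
    then show ?thesis unfolding e by simp
  qed
  have ne: "{SPair a b | a b. a \<in> outA C1 i \<and> b \<in> outA C2 i} \<noteq> {}" if "i < m" for i
  proof -
    have "outA C1 i \<noteq> {}" "outA C2 i \<noteq> {}"
      using C1 C2 that by (simp_all add: wf_chan_def alph_def)
    then obtain a b where "a \<in> outA C1 i" "b \<in> outA C2 i" by blast
    then show ?thesis by blast
  qed
  show ?thesis unfolding alph_def using fin ne by simp
qed

lemma pair_wf:
  assumes C1: "wf_chan m C1" and C2: "wf_chan m C2"
    and g: "\<forall>i<m. \<forall>y\<in>outA C1 i. g i y \<in> inA C2 i"
  shows "wf_chan m (pair_ch m C1 g C2)"
proof -
  define YY where "YY = (\<lambda>i. if i < m then {SPair a b | a b. a \<in> outA C1 i \<and> b \<in> outA C2 i} else {})"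
  have io: "inA (pair_ch m C1 g C2) = inA C1" "outA (pair_ch m C1 g C2) = YY"
    unfolding pair_ch_def Let_def YY_def by simp_all
  have aYY: "alph m YY" unfolding YY_def by (rule alph_pair[OF C1 C2])
  have k: "ker (pair_ch m C1 g C2) x yy = (if x \<in> tup m (inA C1) \<and> yy \<in> tup m YY then
                   ker C1 x (restrict (\<lambda>i. sfst (yy i)) {..<m}) *
                   ker C2 (restrict (\<lambda>i. g i (sfst (yy i))) {..<m}) (restrict (\<lambda>i. ssnd (yy i)) {..<m})
                 else 0)" for x yy unfolding pair_ch_def Let_def YY_def by simp
  have supp: "x \<in> tup m (inA C1) \<and> yy \<in> tup m YY" if "ker (pair_ch m C1 g C2) x yy \<noteq> 0" for x yy
  proof (rule ccontr)
    assume "\<not> (x \<in> tup m (inA C1) \<and> yy \<in> tup m YY)"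
    then have "ker (pair_ch m C1 g C2) x yy = 0" by (simp only: k if_False)
    with that show False by contradiction
  qed
  have sum1: "(\<Sum>yy\<in>tup m YY. ker (pair_ch m C1 g C2) x yy) = 1" if x: "x \<in> tup m (inA C1)" for x
  proof -
    have "(\<Sum>yy\<in>tup m YY. ker (pair_ch m C1 g C2) x yy) = (\<Sum>yy\<in>tup m YY. pmf (PB m C1 g C2 x) yy)"
      by (rule sum.cong[OF refl], rule pair_ker[OF C1 C2 g x])
    also have "\<dots> = 1"
    proof (rule sum_pmf_eq_1[OF finite_tup[OF aYY]])
      show "set_pmf (PB m C1 g C2 x) \<subseteq> tup m YY"
      proof
        fix yy assume "yy \<in> set_pmf (PB m C1 g C2 x)"
        then have "pmf (PB m C1 g C2 x) yy \<noteq> 0" by (simp add: set_pmf_eq)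
        then have "ker (pair_ch m C1 g C2) x yy \<noteq> 0" using pair_ker[OF C1 C2 g x] by simp
        then show "yy \<in> tup m YY" using supp by blast
      qed
    qed
    finally show ?thesis .
  qed
  have nn: "0 \<le> ker (pair_ch m C1 g C2) x yy" for x yy
  proof -
    have "0 \<le> ker C1 x (restrict (\<lambda>i. sfst (yy i)) {..<m}) *
                   ker C2 (restrict (\<lambda>i. g i (sfst (yy i))) {..<m}) (restrict (\<lambda>i. ssnd (yy i)) {..<m})"
      by (rule mult_nonneg_nonneg[OF wf_chanD(3)[OF C1] wf_chanD(3)[OF C2]])
    then show ?thesis unfolding k by simp
  qed
  show ?thesis unfolding wf_chan_def io
    using wf_chanD(1)[OF C1] aYY nn supp sum1 by blast
qed


fun dec :: "nat \<Rightarrow> sym \<Rightarrow> sym list \<times> sym list" where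
  "dec 0 s = (unSList s, [])"
| "dec (Suc k) s = (fst (dec k (sfst s)), snd (dec k (sfst s)) @ [ssnd s])"

lemma dec_foldl: "length ys = k \<Longrightarrow> dec k (foldl SPair (SList l) ys) = (l, ys)"
proof (induction ys arbitrary: k rule: rev_induct)
  case Nil then show ?case by simp
next
  case (snoc y ys)
  then obtain k' where "k = Suc k'" "length ys = k'" by auto
  with snoc show ?case by simp
qed

definition enc :: "nat \<Rightarrow> (nat \<Rightarrow> sym) list \<Rightarrow> (nat \<Rightarrow> sym) list \<Rightarrow> (nat \<Rightarrow> sym)" where
  "enc m ws ys = restrict (\<lambda>i. foldl SPair (SList (map (\<lambda>w. w i) ws)) (map (\<lambda>y. y i) ys)) {..<m}"

definition gk :: "(nat \<Rightarrow> nat \<Rightarrow> sym list \<Rightarrow> sym list \<Rightarrow> sym) \<Rightarrow> nat \<Rightarrow> nat \<Rightarrow> sym \<Rightarrow> sym" where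
  "gk \<zeta> k i s = \<zeta> i k (fst (dec k s)) (snd (dec k s))"

fun CC :: "nat \<Rightarrow> chan \<Rightarrow> (nat \<Rightarrow> sym set) \<Rightarrow> nat \<Rightarrow> (nat \<Rightarrow> nat \<Rightarrow> sym list \<Rightarrow> sym list \<Rightarrow> sym) \<Rightarrow> nat \<Rightarrow> chan" where
  "CC m N W n \<zeta> 0 = id_ch m (blk m W n)"
| "CC m N W n \<zeta> (Suc k) = pair_ch m (CC m N W n \<zeta> k) (gk \<zeta> k) N"

lemma alph_blk:
  assumes A: "alph m A" shows "alph m (blk m A n)"
proof -
  have fin: "finite (blk m A n i)" if "i < m" for i
  proof -
    have "blk m A n i = SList ` {l. set l \<subseteq> A i \<and> length l = n}"
      using that unfolding blk_def by auto
    then show ?thesis using A that by (simp add: alph_def finite_lists_length_eq)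
  qed
  have ne: "blk m A n i \<noteq> {}" if "i < m" for i
  proof -
    have "A i \<noteq> {}" using A that by (simp add: alph_def)
    then obtain a where "a \<in> A i" by blast
    then have "SList (replicate n a) \<in> blk m A n i" using that unfolding blk_def by auto
    then show ?thesis by blast
  qed
  show ?thesis unfolding alph_def using fin ne by (simp add: blk_def)
qed

lemma wf_id: assumes A: "alph m A" shows "wf_chan m (id_ch m A)"
proof -
  have s: "(\<Sum>y\<in>tup m A. ker (id_ch m A) x y) = 1" if x: "x \<in> tup m A" for x
  proof -
    have "(\<Sum>y\<in>tup m A. ker (id_ch m A) x y) = (\<Sum>y\<in>tup m A. if y = x then 1 else 0)"
      by (rule sum.cong) (use x in \<open>auto simp: id_ch_def\<close>)
    also have "\<dots> = 1" using x finite_tup[OF A] by simp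
    finally show ?thesis .
  qed
  show ?thesis unfolding wf_chan_def
    using A s by (auto simp: id_ch_def)
qed

lemma outp_id:
  assumes A: "alph m A" and x: "x \<in> tup m A"
  shows "outp (id_ch m A) x = return_pmf x"
proof (rule pmf_eqI)
  fix y
  have xi: "x \<in> tup m (inA (id_ch m A))" using x by (simp add: id_ch_def)
  have "pmf (outp (id_ch m A) x) y = ker (id_ch m A) x y" by (rule outp_pmf[OF wf_id[OF A] xi])
  also have "\<dots> = pmf (return_pmf x) y" using x by (simp add: id_ch_def indicator_def)
  finally show "pmf (outp (id_ch m A) x) y = pmf (return_pmf x) y" .
qed

lemma CC_inA: "inA (CC m N W n \<zeta> k) = blk m W n"
  by (induction k) (simp_all add: id_ch_def pair_ch_def Let_def)

lemma pair_outA: "outA (pair_ch m C g N) i = (if i < m then {SPair a b | a b. a \<in> outA C i \<and> b \<in> outA N i} else {})"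
  by (simp add: pair_ch_def Let_def)

lemma CC_outA_Suc: "outA (CC m N W n \<zeta> (Suc k)) i = (if i < m then {SPair a b | a b. a \<in> outA (CC m N W n \<zeta> k) i \<and> b \<in> outA N i} else {})"
  by (simp add: pair_ch_def Let_def)

lemma CC_dec: "i < m \<Longrightarrow> s \<in> outA (CC m N W n \<zeta> k) i \<Longrightarrow>
   fst (dec k s) \<in> lists (W i) \<and> length (fst (dec k s)) = n \<and> snd (dec k s) \<in> lists (outA N i) \<and> length (snd (dec k s)) = k"
proof (induction k arbitrary: s)
  case 0
  then show ?case by (auto simp: id_ch_def blk_def)
next
  case (Suc k)
  from Suc.prems obtain a b where s: "s = SPair a b" "a \<in> outA (CC m N W n \<zeta> k) i" "b \<in> outA N i"
    by (auto simp: pair_outA)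
  then show ?case using Suc.IH[of a] Suc.prems(1) by simp
qed

lemma CC_g:
  assumes enc: "enc_valid m N W n \<zeta>" and k: "k < n"
  shows "\<forall>i<m. \<forall>y\<in>outA (CC m N W n \<zeta> k) i. gk \<zeta> k i y \<in> inA N i"
proof (intro allI impI ballI)
  fix i y assume i: "i < m" and y: "y \<in> outA (CC m N W n \<zeta> k) i"
  from CC_dec[OF i y] enc k i show "gk \<zeta> k i y \<in> inA N i"
    unfolding enc_valid_def gk_def by blast
qed

lemma CC_wf:
  assumes N: "wf_chan m N" and W: "alph m W" and enc: "enc_valid m N W n \<zeta>"
  shows "k \<le> n \<Longrightarrow> wf_chan m (CC m N W n \<zeta> k)"
proof (induction k)
  case 0 then show ?case by (simp add: wf_id alph_blk[OF W])
next
  case (Suc k)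
  then show ?case using pair_wf[OF _ N CC_g[OF enc]] by simp
qed

lemma run_len: "ys \<in> set_pmf (run m N \<zeta> ws k) \<Longrightarrow> length ys = k"
  by (induction k arbitrary: ys) auto

lemma iid_set: "ws \<in> set_pmf (iid_pmf p n) \<Longrightarrow> length ws = n \<and> set ws \<subseteq> set_pmf p"
proof (induction n arbitrary: ws)
  case 0 then show ?case by simp
next
  case (Suc n)
  from Suc.prems obtain ws' w where "ws' \<in> set_pmf (iid_pmf p n)" "w \<in> set_pmf p" "ws = ws' @ [w]"
    by auto
  with Suc.IH[of ws'] show ?case by auto
qed

lemma inblock_tup:
  assumes ws: "set ws \<subseteq> tup m W" "length ws = n"
  shows "inblock m ws \<in> tup m (blk m W n)"
  unfolding inblock_def tup_def restrict_PiE_iff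
proof
  fix i assume "i \<in> {..<m}"
  then have i: "i < m" by simp
  have "w i \<in> W i" if "w \<in> set ws" for w
    using PiE_mem[of w "{..<m}" W i] ws(1) that i unfolding tup_def by auto
  then have "map (\<lambda>w. w i) ws \<in> lists (W i)" by auto
  then show "SList (map (\<lambda>w. w i) ws) \<in> blk m W n i" using i ws(2) unfolding blk_def by auto
qed

lemma enc_Nil: "enc m ws [] = inblock m ws" by (simp add: enc_def inblock_def)

lemma enc_snoc: "enc m ws (ys @ [y]) = pairf m (enc m ws ys) y"
  by (rule ext) (simp add: enc_def pairf_def restrict_def)

lemma gr_enc: "length ys = k \<Longrightarrow> gr m (gk \<zeta> k) (enc m ws ys) = xin m \<zeta> ws ys"
  by (rule ext) (simp add: gr_def enc_def gk_def xin_def restrict_def dec_foldl)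

lemma outp_pair:
  assumes C1: "wf_chan m C1" and C2: "wf_chan m C2"
    and g: "\<forall>i<m. \<forall>y\<in>outA C1 i. g i y \<in> inA C2 i"
    and x: "x \<in> tup m (inA C1)"
  shows "outp (pair_ch m C1 g C2) x = PB m C1 g C2 x"
proof (rule pmf_eqI)
  fix yy
  have "inA (pair_ch m C1 g C2) = inA C1" by (simp add: pair_ch_def Let_def)
  then show "pmf (outp (pair_ch m C1 g C2) x) yy = pmf (PB m C1 g C2 x) yy"
    using outp_pmf[OF pair_wf[OF C1 C2 g], of x yy] x pair_ker[OF C1 C2 g x] by simp
qed

lemma CC_outp:
  assumes N: "wf_chan m N" and W: "alph m W" and enc: "enc_valid m N W n \<zeta>"
    and ws: "set ws \<subseteq> tup m W" "length ws = n"
  shows "k \<le> n \<Longrightarrow> outp (CC m N W n \<zeta> k) (inblock m ws) = map_pmf (enc m ws) (run m N \<zeta> ws k)"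
proof (induction k)
  case 0
  then show ?case by (simp add: outp_id[OF alph_blk[OF W] inblock_tup[OF ws]] enc_Nil)
next
  case (Suc k)
  have k: "k < n" "k \<le> n" using Suc.prems by auto
  have wfk: "wf_chan m (CC m N W n \<zeta> k)" by (rule CC_wf[OF N W enc k(2)])
  have x: "inblock m ws \<in> tup m (inA (CC m N W n \<zeta> k))"
    using inblock_tup[OF ws] by (simp add: CC_inA)
  have "outp (CC m N W n \<zeta> (Suc k)) (inblock m ws) = PB m (CC m N W n \<zeta> k) (gk \<zeta> k) N (inblock m ws)"
    using outp_pair[OF wfk N CC_g[OF enc k(1)] x] by simp
  also have "\<dots> = bind_pmf (map_pmf (enc m ws) (run m N \<zeta> ws k))
      (\<lambda>y. map_pmf (pairf m y) (outp N (gr m (gk \<zeta> k) y)))"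
    unfolding PB_def Suc.IH[OF k(2)] ..
  also have "\<dots> = bind_pmf (run m N \<zeta> ws k) (\<lambda>ys. map_pmf (\<lambda>y. enc m ws (ys @ [y])) (outp N (xin m \<zeta> ws ys)))"
    unfolding bind_map_pmf
    by (rule bind_pmf_cong) (auto simp: gr_enc run_len enc_snoc)
  also have "\<dots> = map_pmf (enc m ws) (run m N \<zeta> ws (Suc k))"
    by (simp add: map_bind_pmf map_pmf_comp)
  finally show ?case .
qed

lemma induced_eq:
  assumes N: "wf_chan m N" and W: "alph m W" and pW: "dist_on m W pW" and enc: "enc_valid m N W n \<zeta>"
    and k: "k < n"
  shows "induced m (CC m N W n \<zeta> k) (gk \<zeta> k) (block_src m pW n) = input_dist m N pW n \<zeta> k"
proof -
  have "induced m (CC m N W n \<zeta> k) (gk \<zeta> k) (block_src m pW n)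
      = bind_pmf (iid_pmf pW n) (\<lambda>ws. map_pmf (gr m (gk \<zeta> k)) (outp (CC m N W n \<zeta> k) (inblock m ws)))"
    unfolding induced_def block_src_def bind_map_pmf gr_def ..
  also have "\<dots> = bind_pmf (iid_pmf pW n) (\<lambda>ws. map_pmf (xin m \<zeta> ws) (run m N \<zeta> ws k))"
  proof (rule bind_pmf_cong[OF refl])
    fix ws assume "ws \<in> set_pmf (iid_pmf pW n)"
    then have ws: "set ws \<subseteq> tup m W" "length ws = n" using iid_set pW unfolding dist_on_def by blast+
    show "map_pmf (gr m (gk \<zeta> k)) (outp (CC m N W n \<zeta> k) (inblock m ws)) = map_pmf (xin m \<zeta> ws) (run m N \<zeta> ws k)"
      unfolding CC_outp[OF N W enc ws less_imp_le[OF k]] map_pmf_comp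
      by (rule map_pmf_cong) (auto simp: gr_enc run_len)
  qed
  also have "\<dots> = input_dist m N pW n \<zeta> k"
    unfolding input_dist_def joint_def map_bind_pmf map_pmf_comp by simp
  finally show ?thesis .
qed


lemma unblock_valid:
  assumes x: "x \<in> tup m (blk m W n)"
  shows "set (unblock m n x) \<subseteq> tup m W \<and> length (unblock m n x) = n \<and> inblock m (unblock m n x) = x"
proof -
  have xi: "\<exists>l. x i = SList l \<and> l \<in> lists (W i) \<and> length l = n" if i: "i < m" for i
  proof -
    have "x i \<in> blk m W n i" using PiE_mem[of x "{..<m}" "blk m W n" i] x i unfolding tup_def by simp
    then show ?thesis using i unfolding blk_def by auto
  qed
  have len: "length (unblock m n x) = n" by (simp add: unblock_def)
  have set: "set (unblock m n x) \<subseteq> tup m W"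
  proof
    fix w assume "w \<in> set (unblock m n x)"
    then obtain t where t: "t < n" "w = restrict (\<lambda>i. unSList (x i) ! t) {..<m}" by (auto simp: unblock_def)
    have el: "unSList (x i) ! t \<in> W i" if i: "i < m" for i
    proof -
      obtain l where l: "x i = SList l" "l \<in> lists (W i)" "length l = n" using xi[OF i] by blast
      have "l ! t \<in> set l" using t(1) l(3) by simp
      then show ?thesis using l by auto
    qed
    show "w \<in> tup m W" unfolding tup_def t(2) restrict_PiE_iff using el by simp
  qed
  have inb: "inblock m (unblock m n x) = x"
  proof
    fix j show "inblock m (unblock m n x) j = x j"
    proof (cases "j < m")
      case True
      obtain l where l: "x j = SList l" "l \<in> lists (W j)" "length l = n" using xi[OF True] by blast
      have "map (\<lambda>w. w j) (unblock m n x) = map (\<lambda>t. l ! t) [0..<n]"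
        using True l(1) by (simp add: unblock_def)
      also have "\<dots> = l" using l(3) by (simp add: list_eq_iff_nth_eq)
      finally show ?thesis using True l(1) by (simp add: inblock_def)
    next
      case False
      then show ?thesis using tup_ext[OF x] by (simp add: inblock_def)
    qed
  qed
  show ?thesis using len set inb by simp
qed

definition Tf :: "(nat \<Rightarrow> sym list \<Rightarrow> sym list \<Rightarrow> sym list) \<Rightarrow> nat \<Rightarrow> nat \<Rightarrow> sym \<Rightarrow> sym \<Rightarrow> real" where
  "Tf \<theta> n i s z = (if z = SList (\<theta> i (fst (dec n s)) (snd (dec n s))) then 1 else 0)"

lemma local_T:
  assumes M: "alph m M" and dec: "dec_valid m N W M n \<theta>"
  shows "local_chans m (outA (CC m N W n \<zeta> n)) (blk m M n) (Tf \<theta> n)"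
  unfolding local_chans_def
proof (intro allI impI ballI conjI)
  fix i y z assume i: "i < m" and y: "y \<in> outA (CC m N W n \<zeta> n) i"
  show "0 \<le> Tf \<theta> n i y z" by (simp add: Tf_def)
next
  fix i y assume i: "i < m" and y: "y \<in> outA (CC m N W n \<zeta> n) i"
  have d: "fst (dec n y) \<in> lists (W i) \<and> length (fst (dec n y)) = n \<and> snd (dec n y) \<in> lists (outA N i) \<and> length (snd (dec n y)) = n"
    by (rule CC_dec[OF i y])
  have th: "\<theta> i (fst (dec n y)) (snd (dec n y)) \<in> lists (M i) \<and> length (\<theta> i (fst (dec n y)) (snd (dec n y))) = n"
    using dec d i unfolding dec_valid_def by blast
  have mem: "SList (\<theta> i (fst (dec n y)) (snd (dec n y))) \<in> blk m M n i"
    using th i unfolding blk_def by auto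
  have fin: "finite (blk m M n i)" using alph_blk[OF M] i unfolding alph_def by simp
  show "(\<Sum>z\<in>blk m M n i. Tf \<theta> n i y z) = 1"
    unfolding Tf_def using mem fin by simp
qed

lemma prod01: "(\<Prod>i<(m::nat). if P i then 1 else (0::real)) = (if \<forall>i<m. P i then 1 else 0)"
  by (induction m) (auto simp: less_Suc_eq)

lemma block_key:
  assumes N: "wf_chan m N" and W: "alph m W" and enc: "enc_valid m N W n \<zeta>"
    and x: "x \<in> tup m (blk m W n)" and z: "z \<in> tup m (blk m M n)"
  shows "pmf (map_pmf (outblock m \<theta> (unblock m n x)) (run m N \<zeta> (unblock m n x) n)) z =
    (\<Sum>y\<in>tup m (outA (CC m N W n \<zeta> n)). ker (CC m N W n \<zeta> n) x y * (\<Prod>i<m. Tf \<theta> n i (y i) (z i)))"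
proof -
  define ws where "ws = unblock m n x"
  have ws: "set ws \<subseteq> tup m W" "length ws = n" and xeq: "inblock m ws = x"
    using unblock_valid[OF x] unfolding ws_def by auto
  define h where "h = (\<lambda>y. (\<Prod>i<m. Tf \<theta> n i (y i) (z i)))"
  define A where "A = tup m (outA (CC m N W n \<zeta> n))"
  have wfn: "wf_chan m (CC m N W n \<zeta> n)" by (rule CC_wf[OF N W enc order_refl])
  have finA: "finite A" unfolding A_def by (rule finite_tup[OF wf_chanD(2)[OF wfn]])
  have xin: "x \<in> tup m (inA (CC m N W n \<zeta> n))" using x by (simp add: CC_inA)
  have "(\<Sum>y\<in>A. ker (CC m N W n \<zeta> n) x y * h y) = (\<Sum>y\<in>A. pmf (outp (CC m N W n \<zeta> n) x) y * h y)"
    using outp_pmf[OF wfn xin] by simp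
  also have "\<dots> = measure_pmf.expectation (outp (CC m N W n \<zeta> n) x) h"
  proof -
    have "measure_pmf.expectation (outp (CC m N W n \<zeta> n) x) h = (\<Sum>a\<in>A. pmf (outp (CC m N W n \<zeta> n) x) a *\<^sub>R h a)"
      by (rule integral_measure_pmf[OF finA]) (use outp_set[OF wfn xin] in \<open>auto simp: A_def\<close>)
    then show ?thesis by simp
  qed
  also have "\<dots> = measure_pmf.expectation (run m N \<zeta> ws n) (\<lambda>ys. h (enc m ws ys))"
    using CC_outp[OF N W enc ws order_refl] xeq by simp
  also have "\<dots> = measure_pmf.expectation (run m N \<zeta> ws n) (indicator {ys. outblock m \<theta> ws ys = z})"
  proof (rule integral_cong_AE)
    show "AE ys in measure_pmf (run m N \<zeta> ws n). h (enc m ws ys) = indicator {ys. outblock m \<theta> ws ys = z} ys"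
      unfolding AE_measure_pmf_iff
    proof
      fix ys assume "ys \<in> set_pmf (run m N \<zeta> ws n)"
      then have len: "length ys = n" by (rule run_len)
      have "h (enc m ws ys) = (\<Prod>i<m. if z i = SList (\<theta> i (map (\<lambda>w. w i) ws) (map (\<lambda>y. y i) ys)) then 1 else 0)"
        unfolding h_def by (rule prod.cong) (simp_all add: Tf_def enc_def dec_foldl len)
      also have "\<dots> = (if \<forall>i<m. z i = SList (\<theta> i (map (\<lambda>w. w i) ws) (map (\<lambda>y. y i) ys)) then 1 else 0)"
        by (rule prod01)
      also have "(\<forall>i<m. z i = SList (\<theta> i (map (\<lambda>w. w i) ws) (map (\<lambda>y. y i) ys))) \<longleftrightarrow> outblock m \<theta> ws ys = z"
      proof
        assume a: "\<forall>i<m. z i = SList (\<theta> i (map (\<lambda>w. w i) ws) (map (\<lambda>y. y i) ys))"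
        show "outblock m \<theta> ws ys = z"
        proof
          fix j show "outblock m \<theta> ws ys j = z j"
            by (cases "j < m") (use a tup_ext[OF z, of j] in \<open>auto simp: outblock_def\<close>)
        qed
      next
        assume "outblock m \<theta> ws ys = z"
        then show "\<forall>i<m. z i = SList (\<theta> i (map (\<lambda>w. w i) ws) (map (\<lambda>y. y i) ys))"
          by (auto simp: outblock_def)
      qed
      finally show "h (enc m ws ys) = indicator {ys. outblock m \<theta> ws ys = z} ys"
        by (simp add: indicator_def)
    qed
  qed simp_all
  also have "\<dots> = pmf (map_pmf (outblock m \<theta> ws) (run m N \<zeta> ws n)) z"
  proof -
    have "{ys. outblock m \<theta> ws ys = z} = outblock m \<theta> ws -` {z}" by auto
    then show ?thesis by (simp add: pmf_map)
  qed
  finally show ?thesis unfolding A_def h_def ws_def by simp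
qed

lemma block_eq:
  assumes N: "wf_chan m N" and W: "alph m W" and enc: "enc_valid m N W n \<zeta>"
  shows "block_ch m N W M n \<zeta> \<theta> = post_ch m (CC m N W n \<zeta> n) (blk m M n) (Tf \<theta> n)"
proof -
  have k: "(\<lambda>wt mt. if wt \<in> tup m (blk m W n) \<and> mt \<in> tup m (blk m M n) then
              pmf (map_pmf (outblock m \<theta> (unblock m n wt)) (run m N \<zeta> (unblock m n wt) n)) mt
            else 0) =
     (\<lambda>x z. if x \<in> tup m (inA (CC m N W n \<zeta> n)) \<and> z \<in> tup m (blk m M n) then
              (\<Sum>y\<in>tup m (outA (CC m N W n \<zeta> n)). ker (CC m N W n \<zeta> n) x y * (\<Prod>i<m. Tf \<theta> n i (y i) (z i))) else 0)"
  proof (intro ext)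
    fix x z
    show "(if x \<in> tup m (blk m W n) \<and> z \<in> tup m (blk m M n) then
              pmf (map_pmf (outblock m \<theta> (unblock m n x)) (run m N \<zeta> (unblock m n x) n)) z
            else 0) =
     (if x \<in> tup m (inA (CC m N W n \<zeta> n)) \<and> z \<in> tup m (blk m M n) then
              (\<Sum>y\<in>tup m (outA (CC m N W n \<zeta> n)). ker (CC m N W n \<zeta> n) x y * (\<Prod>i<m. Tf \<theta> n i (y i) (z i))) else 0)"
    proof (cases "x \<in> tup m (blk m W n) \<and> z \<in> tup m (blk m M n)")
      case True
      then have xx: "x \<in> tup m (blk m W n)" and zz: "z \<in> tup m (blk m M n)" by auto
      show ?thesis using block_key[OF N W enc xx zz, where \<theta> = \<theta>] True by (simp add: CC_inA)
    next
      case False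
      have nc: "\<not> (x \<in> tup m (inA (CC m N W n \<zeta> n)) \<and> z \<in> tup m (blk m M n))"
        using False unfolding CC_inA .
      show ?thesis by (simp only: if_not_P[OF False] if_not_P[OF nc])
    qed
  qed
  show ?thesis unfolding block_ch_def post_ch_def CC_inA k by simp
qed

lemma msum_step:
  fixes K :: "('a::real_vector) set"
  assumes u: "u \<in> convex hull K" and w: "w \<in> K"
  shows "real k *\<^sub>R u + w \<in> rtimes (real (Suc k)) (convex hull K)"
proof -
  define d where "d = real k + 1"
  have dpos: "0 < d" unfolding d_def using of_nat_0_le_iff[of k] by linarith
  then have dnz: "d \<noteq> 0" by simp
  have ab: "real k / d + 1 / d = 1"
  proof -
    have "real k / d + 1 / d = (real k + 1) / d" by (rule add_divide_distrib[symmetric])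
    also have "\<dots> = d / d" by (simp add: d_def)
    also have "\<dots> = 1" using dnz by simp
    finally show ?thesis .
  qed
  have a0: "0 \<le> real k / d" using dpos by simp
  have b0: "0 \<le> 1 / d" using dpos by simp
  have c: "(real k / d) *\<^sub>R u + (1 / d) *\<^sub>R w \<in> convex hull K"
    by (rule convexD[OF convex_convex_hull u hull_inc[OF w] a0 b0 ab])
  have e: "real k *\<^sub>R u + w = d *\<^sub>R ((real k / d) *\<^sub>R u + (1 / d) *\<^sub>R w)"
    using dnz by (simp add: scaleR_add_right)
  have dS: "real (Suc k) = d" by (simp add: d_def)
  show ?thesis unfolding rtimes_def dS using c e by blast
qed

theorem lemma1:
  fixes \<phi> :: "chan \<Rightarrow> (nat \<Rightarrow> sym) pmf set \<Rightarrow> (real ^ 'c) set"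
    and m :: nat
  assumes nonneg: "\<And>C \<Psi>. wf_chan m C \<Longrightarrow> (\<forall>q\<in>\<Psi>. dist_on m (inA C) q) \<Longrightarrow>
                       \<phi> C \<Psi> \<subseteq> {v. \<forall>j. 0 \<le> v $ j}"
    and P1: "\<And>C1 C2 g q \<Psi>. wf_chan m C1 \<Longrightarrow> wf_chan m C2 \<Longrightarrow>
               (\<forall>i<m. \<forall>y\<in>outA C1 i. g i y \<in> inA C2 i) \<Longrightarrow>
               dist_on m (inA C1) q \<Longrightarrow> (\<forall>q'\<in>\<Psi>. dist_on m (inA C2) q') \<Longrightarrow>
               induced m C1 g q \<in> \<Psi> \<Longrightarrow>
               \<phi> (pair_ch m C1 g C2) {q} \<subseteq> msum (\<phi> C1 {q}) (\<phi> C2 \<Psi>)"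
    and P2: "\<And>A q. alph m A \<Longrightarrow> dist_on m A q \<Longrightarrow> \<phi> (id_ch m A) {q} = {0}"
    and P3: "\<And>C Z T q. wf_chan m C \<Longrightarrow> alph m Z \<Longrightarrow> local_chans m (outA C) Z T \<Longrightarrow>
               dist_on m (inA C) q \<Longrightarrow> \<phi> (post_ch m C Z T) {q} \<subseteq> \<phi> C {q}"
    and N: "wf_chan m N"
    and W: "alph m W" and pW: "dist_on m W pW"
    and M: "alph m M" and f: "\<forall>i<m. \<forall>w\<in>tup m W. f i w \<in> M i"
    and Delta: "\<forall>i<m. \<forall>a\<in>M i. \<Delta> i a a = 0"
    and eps: "\<epsilon> > 0"
    and enc: "enc_valid m N W n \<zeta>" and dec: "dec_valid m N W M n \<theta>"
    and dist: "\<forall>i<m. exp_dist m N pW n \<zeta> \<theta> f \<Delta> i \<le> D i + \<epsilon>"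
    and perm: "permissible m N W pW \<Psi>"
  shows "\<phi> (block_ch m N W M n \<zeta> \<theta>) {block_src m pW n}
           \<subseteq> rtimes (real n) (convex hull (\<phi> N \<Psi>))"
proof -
  let ?q = "block_src m pW n"
  let ?K = "\<phi> N \<Psi>"
  have n0: "0 < n" using enc by (simp add: enc_valid_def)
  have qd: "dist_on m (blk m W n) ?q"
    unfolding dist_on_def block_src_def
  proof
    fix x assume "x \<in> set_pmf (map_pmf (inblock m) (iid_pmf pW n))"
    then obtain ws where ws: "ws \<in> set_pmf (iid_pmf pW n)" and xe: "x = inblock m ws" by auto
    have "set ws \<subseteq> tup m W" "length ws = n" using iid_set[OF ws] pW unfolding dist_on_def by auto
    then show "x \<in> tup m (blk m W n)" using inblock_tup xe by simp
  qed
  have PsiD: "\<forall>q'\<in>\<Psi>. dist_on m (inA N) q'" using perm by (simp add: permissible_def)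
  have main: "\<phi> (CC m N W n \<zeta> k) {?q} \<subseteq> (if k = 0 then {0} else rtimes (real k) (convex hull ?K))"
    if "k \<le> n" for k
    using that
  proof (induction k)
    case 0
    have "\<phi> (CC m N W n \<zeta> 0) {?q} = {0}" using P2[OF alph_blk[OF W] qd] by simp
    then show ?case by simp
  next
    case (Suc k)
    have k: "k < n" "k \<le> n" using Suc.prems by auto
    have wfk: "wf_chan m (CC m N W n \<zeta> k)" by (rule CC_wf[OF N W enc k(2)])
    have qdk: "dist_on m (inA (CC m N W n \<zeta> k)) ?q" using qd by (simp add: CC_inA)
    have ind: "induced m (CC m N W n \<zeta> k) (gk \<zeta> k) ?q \<in> \<Psi>"
      using induced_eq[OF N W pW enc k(1)] perm enc k(1) unfolding permissible_def by auto
    have "\<phi> (CC m N W n \<zeta> (Suc k)) {?q} \<subseteq> msum (\<phi> (CC m N W n \<zeta> k) {?q}) ?K"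
      using P1[OF wfk N CC_g[OF enc k(1)] qdk PsiD ind] by simp
    also have "\<dots> \<subseteq> rtimes (real (Suc k)) (convex hull ?K)"
    proof
      fix v assume "v \<in> msum (\<phi> (CC m N W n \<zeta> k) {?q}) ?K"
      then obtain v1 v2 where v: "v = v1 + v2" "v1 \<in> \<phi> (CC m N W n \<zeta> k) {?q}" "v2 \<in> ?K"
        unfolding msum_def by blast
      have v1: "v1 \<in> (if k = 0 then {0} else rtimes (real k) (convex hull ?K))" using Suc.IH k(2) v(2) by blast
      obtain u where u: "u \<in> convex hull ?K" "v1 = real k *\<^sub>R u"
      proof (cases "k = 0")
        case True
        then have "v1 = 0" using v1 by simp
        then show ?thesis using that[of v2] hull_inc[OF v(3)] True by simp
      next
        case False
        then have "v1 \<in> rtimes (real k) (convex hull ?K)" using v1 by simp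
        then show ?thesis using that unfolding rtimes_def by blast
      qed
      show "v \<in> rtimes (real (Suc k)) (convex hull ?K)"
        using msum_step[OF u(1) v(3), of k] v(1) u(2) by simp
    qed
    finally show ?case by simp
  qed
  have wfn: "wf_chan m (CC m N W n \<zeta> n)" by (rule CC_wf[OF N W enc order_refl])
  have "\<phi> (block_ch m N W M n \<zeta> \<theta>) {?q} = \<phi> (post_ch m (CC m N W n \<zeta> n) (blk m M n) (Tf \<theta> n)) {?q}"
    using block_eq[OF N W enc] by simp
  also have "\<dots> \<subseteq> \<phi> (CC m N W n \<zeta> n) {?q}"
    by (rule P3[OF wfn alph_blk[OF M] local_T[OF M dec]]) (simp add: CC_inA qd)
  also have "\<dots> \<subseteq> rtimes (real n) (convex hull ?K)" using main[OF order_refl] n0 by simp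
  finally show ?thesis .
qed

end
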